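(* Let $x_0\in(0,1)$ and let $a,b:[0,1]\to\mathbb R$ with $a(x_0)=b(x_0)=0$, $a,b>0$ on $[0,1]\setminus\{x_0\}$, and assume that either (1) $a,b\in W^{1,\infty}(0,1)$, or (2) $a,b\in W^{1,1}(0,1)$ and there exist $K_1,K_2,c_1,c_2>0$ with $K_1+K_2\ge1$, $|x-x_0|^{K_1}\ge c_1a(x)$ and $|x-x_0|^{K_2}\ge c_2b(x)$ for all $x\in[0,1]$. Then 1. $\frac{1}{ab}\notin L^1(0,1)$; 2. $u(x_0)=0$ for every $u\in\mathcal K_{a,b}$.
   Context: $L^2_{\frac1a}(0,1)=\{u\in L^2(0,1):\int_0^1u^2/a\,dx<\infty\}$. $\mathcal K_a$ denotes $L^2_{\frac1a}(0,1)\cap H^1_0(0,1)$ (Dirichlet case) or $L^2_{\frac1a}(0,1)\cap H^1(0,1)$ (Neumann case), and $\mathcal K_{a,b}=\{u\in\mathcal K_a: u/\sqrt{ab}\in L^2(0,1)\}$. The conclusion holds for either choice. *)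

theory Defs
  imports "HOL-Analysis.Analysis"
begin

text \<open>Function spaces on the open interval (0,1), for real functions defined on all of R
  (values outside (0,1) are irrelevant). Elements of Sobolev spaces are identified with
  their continuous representative on [0,1], so that point values make sense.\<close>

definition L1 :: "(real \<Rightarrow> real) \<Rightarrow> bool" where
  "L1 f \<longleftrightarrow> set_integrable lborel {0<..<1::real} f"

definition L2 :: "(real \<Rightarrow> real) \<Rightarrow> bool" where
  "L2 f \<longleftrightarrow> set_borel_measurable lborel {0<..<1::real} f \<and>
                set_integrable lborel {0<..<1::real} (\<lambda>x. (f x)\<^sup>2)"

definition Linf :: "(real \<Rightarrow> real) \<Rightarrow> bool" where
  "Linf f \<longleftrightarrow> set_borel_measurable lborel {0<..<1::real} f \<and>
                (\<exists>C. AE x in lborel. x \<in> {0<..<1} \<longrightarrow> \<bar>f x\<bar> \<le> C)"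

definition test_fun :: "(real \<Rightarrow> real) \<Rightarrow> (real \<Rightarrow> real) \<Rightarrow> bool" where
  "test_fun \<phi> \<phi>' \<longleftrightarrow> (\<forall>x. (\<phi> has_real_derivative \<phi>' x) (at x)) \<and> continuous_on UNIV \<phi>' \<and>
     (\<exists>c d. 0 < c \<and> c \<le> d \<and> d < 1 \<and> (\<forall>x. x \<notin> {c..d} \<longrightarrow> \<phi> x = 0))"

definition weak_deriv :: "(real \<Rightarrow> real) \<Rightarrow> (real \<Rightarrow> real) \<Rightarrow> bool" where
  "weak_deriv u g \<longleftrightarrow> (\<forall>\<phi> \<phi>'. test_fun \<phi> \<phi>' \<longrightarrow>
     (LINT x:{0<..<1}|lborel. u x * \<phi>' x) = - (LINT x:{0<..<1}|lborel. g x * \<phi> x))"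

definition W11 :: "(real \<Rightarrow> real) \<Rightarrow> bool" where
  "W11 u \<longleftrightarrow> continuous_on {0..1} u \<and> L1 u \<and> (\<exists>g. L1 g \<and> weak_deriv u g)"

definition W1inf :: "(real \<Rightarrow> real) \<Rightarrow> bool" where
  "W1inf u \<longleftrightarrow> continuous_on {0..1} u \<and> Linf u \<and> (\<exists>g. Linf g \<and> weak_deriv u g)"

definition H1 :: "(real \<Rightarrow> real) \<Rightarrow> bool" where
  "H1 u \<longleftrightarrow> continuous_on {0..1} u \<and> L2 u \<and> (\<exists>g. L2 g \<and> weak_deriv u g)"

definition H10 :: "(real \<Rightarrow> real) \<Rightarrow> bool" where
  "H10 u \<longleftrightarrow> H1 u \<and> u 0 = 0 \<and> u 1 = 0"

definition L2w :: "(real \<Rightarrow> real) \<Rightarrow> (real \<Rightarrow> real) \<Rightarrow> bool" where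
  "L2w a u \<longleftrightarrow> L2 u \<and> set_integrable lborel {0<..<1::real} (\<lambda>x. (u x)\<^sup>2 / a x)"

text \<open>K_a: Dirichlet case (dir = True) uses H^1_0, Neumann case (dir = False) uses H^1.\<close>
definition K_a :: "bool \<Rightarrow> (real \<Rightarrow> real) \<Rightarrow> (real \<Rightarrow> real) \<Rightarrow> bool" where
  "K_a dir a u \<longleftrightarrow> L2w a u \<and> (if dir then H10 u else H1 u)"

definition K_ab :: "bool \<Rightarrow> (real \<Rightarrow> real) \<Rightarrow> (real \<Rightarrow> real) \<Rightarrow> (real \<Rightarrow> real) \<Rightarrow> bool" where
  "K_ab dir a b u \<longleftrightarrow> K_a dir a u \<and> L2 (\<lambda>x. u x / sqrt (a x * b x))"

end

theory Submission
  imports Defs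
begin

lemma deriv_paste:
  fixes f ga gb :: "real \<Rightarrow> real"
  assumes d: "\<delta> > 0"
    and ga: "(ga has_real_derivative D) (at x)" and gb: "(gb has_real_derivative D) (at x)"
    and e1: "\<And>t. x - \<delta> < t \<Longrightarrow> t \<le> x \<Longrightarrow> f t = ga t"
    and e2: "\<And>t. x \<le> t \<Longrightarrow> t < x + \<delta> \<Longrightarrow> f t = gb t"
  shows "(f has_real_derivative D) (at x)"
proof -
  have fx1: "f x = ga x" using e1[of x] d by auto
  have fx2: "f x = gb x" using e2[of x] d by auto
  have l1: "((\<lambda>y. (ga y - ga x) / (y - x)) \<longlongrightarrow> D) (at_left x)"
    by (rule tendsto_mono[OF _ ga[unfolded has_field_derivative_iff]]) (rule at_le, simp)
  have l2: "((\<lambda>y. (gb y - gb x) / (y - x)) \<longlongrightarrow> D) (at_right x)"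
    by (rule tendsto_mono[OF _ gb[unfolded has_field_derivative_iff]]) (rule at_le, simp)
  have ev1: "eventually (\<lambda>y. (ga y - ga x) / (y - x) = (f y - f x) / (y - x)) (at_left x)"
  proof -
    have "eventually (\<lambda>y. y \<in> {x - \<delta><..<x}) (at_left x)"
      using d by (intro eventually_at_left_real) auto
    then show ?thesis by eventually_elim (simp add: e1 fx1)
  qed
  have ev2: "eventually (\<lambda>y. (gb y - gb x) / (y - x) = (f y - f x) / (y - x)) (at_right x)"
  proof -
    have "eventually (\<lambda>y. y \<in> {x<..<x + \<delta>}) (at_right x)"
      using d by (intro eventually_at_right_real) auto
    then show ?thesis by eventually_elim (simp add: e2 fx2)
  qed
  show ?thesis unfolding has_field_derivative_iff
    using Lim_transform_eventually[OF l1 ev1] Lim_transform_eventually[OF l2 ev2]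
    by (simp add: filterlim_at_split)
qed

definition Sm :: "real \<Rightarrow> real" where
  "Sm s = (if s \<le> 0 then 0 else if s \<ge> 1 then 1 else 3 * s^2 - 2 * s^3)"
definition Smd :: "real \<Rightarrow> real" where
  "Smd s = 6 * max 0 (s * (1 - s))"

lemma Smd_cont: "continuous_on UNIV Smd"
  unfolding Smd_def by (intro continuous_intros)

lemma Smd_nonneg: "Smd s \<ge> 0" by (simp add: Smd_def)

lemma Smd_zero: "s \<le> 0 \<or> s \<ge> 1 \<Longrightarrow> Smd s = 0"
proof -
  assume "s \<le> 0 \<or> s \<ge> 1"
  then have "s * (1 - s) \<le> 0"
    by (auto intro: mult_nonpos_nonneg mult_nonneg_nonpos)
  then show ?thesis unfolding Smd_def by simp
qed

lemma Sm_range: "0 \<le> Sm s" "Sm s \<le> 1"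
proof -
  have "s > 0 \<Longrightarrow> s < 1 \<Longrightarrow> 0 \<le> 3 * s^2 - 2 * s^3 \<and> 3 * s^2 - 2 * s^3 \<le> 1"
  proof -
    assume "s > 0" "s < 1"
    have "3 * s^2 - 2 * s^3 = s^2 * (3 - 2 * s)" by (simp add: algebra_simps power2_eq_square power3_eq_cube)
    moreover have "1 - (3 * s^2 - 2 * s^3) = (1 - s)^2 * (1 + 2 * s)" by (simp add: algebra_simps power2_eq_square power3_eq_cube)
    ultimately show ?thesis using \<open>s > 0\<close> \<open>s<1\<close> by (smt (verit) mult_nonneg_nonneg zero_le_power2)
  qed
  then show "0 \<le> Sm s" "Sm s \<le> 1" unfolding Sm_def by auto
qed

lemma Sm_deriv: "(Sm has_real_derivative Smd s) (at s)"
proof -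
  have p: "((\<lambda>t. 3 * t^2 - 2 * t^3) has_real_derivative 6 * t * (1-t)) (at t)" for t :: real
    by (auto intro!: derivative_eq_intros simp: algebra_simps power2_eq_square)
  have c0: "\<And>c t. ((\<lambda>_. c) has_real_derivative 0) (at t)" by simp
  consider "s < 0" | "s = 0" | "0 < s" "s < 1" | "s = 1" | "s > 1" by linarith
  then show ?thesis
  proof cases
    case 1
    then have "Smd s = 0" by (simp add: Smd_zero)
    moreover have "(Sm has_real_derivative 0) (at s)"
      by (rule has_field_derivative_transform_within_open[OF c0[of 0 s], of "{..<0}"])
         (use 1 in \<open>auto simp: Sm_def\<close>)
    ultimately show ?thesis by simp
  next
    case 2
    then have "Smd s = 0" by (simp add: Smd_zero)
    moreover have "(Sm has_real_derivative 0) (at 0)"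
      by (rule deriv_paste[where \<delta>=1 and ga="\<lambda>_. 0" and gb="\<lambda>t. 3 * t^2 - 2 * t^3"])
         (use p[of 0] in \<open>auto simp: Sm_def\<close>)
    ultimately show ?thesis using 2 by simp
  next
    case 3
    have "Smd s = 6 * s * (1-s)" using 3 by (simp add: Smd_def)
    moreover have "(Sm has_real_derivative 6 * s * (1-s)) (at s)"
      by (rule has_field_derivative_transform_within_open[OF p[of s], of "{0<..<1}"])
         (use 3 in \<open>auto simp: Sm_def\<close>)
    ultimately show ?thesis by simp
  next
    case 4
    then have "Smd s = 0" by (simp add: Smd_zero)
    moreover have "(Sm has_real_derivative 0) (at 1)"
      by (rule deriv_paste[where \<delta>=1 and gb="\<lambda>_. 1" and ga="\<lambda>t. 3 * t^2 - 2 * t^3"])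
         (use p[of 1] in \<open>auto simp: Sm_def\<close>)
    ultimately show ?thesis using 4 by simp
  next
    case 5
    then have "Smd s = 0" by (simp add: Smd_zero)
    moreover have "(Sm has_real_derivative 0) (at s)"
      by (rule has_field_derivative_transform_within_open[OF c0[of 1 s], of "{1<..}"])
         (use 5 in \<open>auto simp: Sm_def\<close>)
    ultimately show ?thesis by simp
  qed
qed


lemma Sm_cont: "continuous_on UNIV Sm"
  using Sm_deriv by (meson DERIV_isCont continuous_at_imp_continuous_on)

lemma Sm_cont_on[continuous_intros]: "continuous_on S f \<Longrightarrow> continuous_on S (\<lambda>t. Sm (f t))"
  by (rule continuous_on_compose2[OF Sm_cont]) auto

lemma Smd_cont_on[continuous_intros]: "continuous_on S f \<Longrightarrow> continuous_on S (\<lambda>t. Smd (f t))"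
  by (rule continuous_on_compose2[OF Smd_cont]) auto

lemma Sm_chain[derivative_intros]:
  "(f has_real_derivative f') (at x within S) \<Longrightarrow>
    ((\<lambda>x. Sm (f x)) has_real_derivative Smd (f x) * f') (at x within S)"
  by (rule DERIV_chain2[OF Sm_deriv])

lemma Sm_zero: "s \<le> 0 \<Longrightarrow> Sm s = 0" and Sm_one: "s \<ge> 1 \<Longrightarrow> Sm s = 1"
  by (auto simp: Sm_def)

lemma tf:
  assumes "0 < h" "0 < y - h" "y \<le> x" "x + h < 1"
  shows "test_fun (\<lambda>t. Sm ((t - y + h)/h) * Sm ((x + h - t)/h))
     (\<lambda>t. Smd ((t - y + h)/h) / h * Sm ((x + h - t)/h) - Sm ((t - y + h)/h) * (Smd ((x + h - t)/h) / h))"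
  unfolding test_fun_def
proof (intro conjI allI)
  fix t
  show "((\<lambda>t. Sm ((t - y + h)/h) * Sm ((x + h - t)/h)) has_real_derivative
     Smd ((t - y + h)/h) / h * Sm ((x + h - t)/h) - Sm ((t - y + h)/h) * (Smd ((x + h - t)/h) / h)) (at t)"
  proof -
    have d1: "((\<lambda>t. (t - y + h)/h) has_real_derivative 1/h) (at t)"
      using assms(1) by (auto intro!: derivative_eq_intros)
    have d2: "((\<lambda>t. (x + h - t)/h) has_real_derivative -1/h) (at t)"
      using assms(1) by (auto intro!: derivative_eq_intros)
    show ?thesis
      by (rule DERIV_cong[OF DERIV_mult[OF Sm_chain[OF d1] Sm_chain[OF d2]]]) (simp add: algebra_simps)
  qed
next
  show "continuous_on UNIV (\<lambda>t. Smd ((t - y + h)/h) / h * Sm ((x + h - t)/h) - Sm ((t - y + h)/h) * (Smd ((x + h - t)/h) / h))"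
    by (intro continuous_intros) (use assms(1) in auto)
next
  show "\<exists>c d. 0 < c \<and> c \<le> d \<and> d < 1 \<and> (\<forall>t. t \<notin> {c..d} \<longrightarrow> Sm ((t - y + h)/h) * Sm ((x + h - t)/h) = 0)"
  proof (intro exI conjI allI impI)
    fix t assume "t \<notin> {y - h..x + h}"
    then have "t < y - h \<or> t > x + h" by auto
    then show "Sm ((t - y + h)/h) * Sm ((x + h - t)/h) = 0"
    proof
      assume "t < y - h"
      then have "(t - y + h)/h \<le> 0" using assms(1) by (simp add: divide_nonpos_pos)
      then show ?thesis by (simp add: Sm_zero)
    next
      assume "t > x + h"
      then have "(x + h - t)/h \<le> 0" using assms(1) by (simp add: divide_nonpos_pos)
      then show ?thesis by (simp add: Sm_zero)
    qed
  qed (use assms in auto)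
qed

lemma ftc_ab:
  fixes F f :: "real \<Rightarrow> real"
  assumes "p \<le> q" "\<And>t. p \<le> t \<Longrightarrow> t \<le> q \<Longrightarrow> (F has_real_derivative f t) (at t)"
    and "continuous_on {p..q} f"
  shows "set_integrable lborel {p<..<q} f" "(LINT t:{p<..<q}|lborel. f t) = F q - F p"
proof -
  show "set_integrable lborel {p<..<q} f"
    by (rule set_integrable_subset[OF borel_integrable_atLeastAtMost'[OF assms(3)]]) auto
  have "(LBINT t=p..q. f t) = F q - F p"
  proof (rule interval_integral_FTC_finite)
    show "continuous_on {min p q..max p q} f" using assms(1,3) by (simp add: min_def max_def)
    fix t assume "min p q \<le> t" "t \<le> max p q"
    then have "p \<le> t" "t \<le> q" using assms(1) by (simp_all add: min_def max_def)
    then have "(F has_real_derivative f t) (at t)" by (rule assms(2))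
    then have "(F has_real_derivative f t) (at t within {min p q..max p q})"
      by (rule has_field_derivative_at_within)
    then show "(F has_vector_derivative f t) (at t within {min p q..max p q})"
      by (simp add: has_real_derivative_iff_has_vector_derivative)
  qed
  then show "(LINT t:{p<..<q}|lborel. f t) = F q - F p"
    using assms(1) by (simp add: interval_lebesgue_integral_le_eq)
qed

lemma abs_set_integral_le:
  fixes f k :: "real \<Rightarrow> real"
  assumes "set_integrable lborel S f" "set_integrable lborel S k" "\<And>t. t \<in> S \<Longrightarrow> \<bar>f t\<bar> \<le> k t"
  shows "\<bar>LINT t:S|lborel. f t\<bar> \<le> (LINT t:S|lborel. k t)"
proof -
  have "(LINT t:S|lborel. f t) \<le> (LINT t:S|lborel. k t)"
    by (rule set_integral_mono) (use assms in \<open>auto simp: abs_le_iff\<close>)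
  moreover have "(LINT t:S|lborel. - f t) \<le> (LINT t:S|lborel. k t)"
  proof (rule set_integral_mono)
    show "set_integrable lborel S (\<lambda>t. - f t)"
      using set_integrable_mult_right[of "-1" lborel S f] assms(1) by simp
  qed (use assms in \<open>auto simp: abs_le_iff\<close>)
  moreover have "(LINT t:S|lborel. - f t) = - (LINT t:S|lborel. f t)"
    using assms(1) by (simp add: set_integral_uminus)
  ultimately show ?thesis by linarith
qed


lemma abs_set_integral_le_AE:
  fixes f k :: "real \<Rightarrow> real"
  assumes "set_integrable lborel S f" "set_integrable lborel S k"
    and "AE t in lborel. t \<in> S \<longrightarrow> \<bar>f t\<bar> \<le> k t"
  shows "\<bar>LINT t:S|lborel. f t\<bar> \<le> (LINT t:S|lborel. k t)"
proof -
  have "(LINT t:S|lborel. f t) \<le> (LINT t:S|lborel. k t)"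
    by (rule set_integral_mono_AE) (use assms in \<open>auto simp: abs_le_iff elim!: AE_mp\<close>)
  moreover have "(LINT t:S|lborel. - f t) \<le> (LINT t:S|lborel. k t)"
  proof (rule set_integral_mono_AE)
    show "set_integrable lborel S (\<lambda>t. - f t)"
      using set_integrable_mult_right[of "-1" lborel S f] assms(1) by simp
  qed (use assms in \<open>auto simp: abs_le_iff elim!: AE_mp\<close>)
  moreover have "(LINT t:S|lborel. - f t) = - (LINT t:S|lborel. f t)"
    using assms(1) by (simp add: set_integral_uminus)
  ultimately show ?thesis by linarith
qed

lemma cont_int01:
  fixes f :: "real \<Rightarrow> real"
  assumes "continuous_on {0..1} f"
  shows "set_integrable lborel {0<..<1} f"
  by (rule set_integrable_subset[OF borel_integrable_atLeastAtMost'[OF assms]]) auto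

lemma lip_eps:
  fixes a g :: "real \<Rightarrow> real"
  assumes cont: "continuous_on {0..1} a" and wd: "weak_deriv a g"
    and gm: "set_borel_measurable lborel {0<..<1} g"
    and gb: "AE t in lborel. t \<in> {0<..<1} \<longrightarrow> \<bar>g t\<bar> \<le> C" and C: "C \<ge> 0"
    and xy: "0 < y" "y < x" "x < 1" and e: "e > 0"
  shows "\<bar>a x - a y\<bar> \<le> C * (x - y) + (2 + 2*C) * e"
proof -
  have y01: "y \<in> {0..1}" and x01: "x \<in> {0..1}" using xy by auto
  obtain d1 where d1: "d1 > 0" "\<And>t. t \<in> {0..1} \<Longrightarrow> dist t y < d1 \<Longrightarrow> dist (a t) (a y) < e"
    using cont y01 e unfolding continuous_on_iff by metis
  obtain d2 where d2: "d2 > 0" "\<And>t. t \<in> {0..1} \<Longrightarrow> dist t x < d2 \<Longrightarrow> dist (a t) (a x) < e"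
    using cont x01 e unfolding continuous_on_iff by metis
  define h where "h = min e (min (d1/2) (min (d2/2) (min (y/2) ((1-x)/2))))"
  define R3 where "R3 = min (y/2) ((1-x)/2)"
  define R2 where "R2 = min (d2/2) R3"
  define R1 where "R1 = min (d1/2) R2"
  have hR: "h = min e R1" unfolding h_def R1_def R2_def R3_def by simp
  have r: "h \<le> e" "h \<le> R1" "R1 \<le> d1/2" "R1 \<le> R2" "R2 \<le> d2/2" "R2 \<le> R3"
    "R3 \<le> y/2" "R3 \<le> (1-x)/2"
    unfolding hR R1_def R2_def R3_def by (rule min.cobounded1 min.cobounded2)+
  have "R3 > 0" unfolding R3_def using xy by simp
  then have "R2 > 0" unfolding R2_def using d2 by simp
  then have "R1 > 0" unfolding R1_def using d1 by simp
  then have "h > 0" unfolding hR using e by simp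
  moreover have "x + h < 1"
  proof -
    have "h \<le> (1-x)/2" using r by linarith
    then have "2 * h \<le> 1 - x" by simp
    then show ?thesis using xy \<open>h > 0\<close> by linarith
  qed
  ultimately have h: "h > 0" "h \<le> e" "h < d1" "h < d2" "0 < y - h" "x + h < 1"
    using r d1 d2 xy by linarith+
  define u1 where "u1 t = (t - y + h)/h" for t
  define u2 where "u2 t = (x + h - t)/h" for t
  define \<phi> where "\<phi> t = Sm ((t - y + h)/h) * Sm ((x + h - t)/h)" for t
  define \<phi>' where "\<phi>' t = Smd ((t - y + h)/h) / h * Sm ((x + h - t)/h) - Sm ((t - y + h)/h) * (Smd ((x + h - t)/h) / h)" for t
  define P where "P t = Smd (u1 t) / h" for t
  define N where "N t = Smd (u2 t) / h" for t
  have tf\<phi>: "test_fun \<phi> \<phi>'"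
    unfolding \<phi>_def \<phi>'_def by (rule tf) (use h xy in auto)
  have weq: "(LINT t:{0<..<1}|lborel. a t * \<phi>' t) = - (LINT t:{0<..<1}|lborel. g t * \<phi> t)"
    using wd tf\<phi> unfolding weak_deriv_def by blast
  have Pnz: "y - h < t \<and> t < y" if "P t \<noteq> 0" for t
  proof -
    have "Smd (u1 t) \<noteq> 0" using that by (auto simp: P_def)
    then have "0 < u1 t" "u1 t < 1" using Smd_zero[of "u1 t"] by force+
    then show ?thesis using h(1) by (auto simp: u1_def field_simps)
  qed
  have Nnz: "x < t \<and> t < x + h" if "N t \<noteq> 0" for t
  proof -
    have "Smd (u2 t) \<noteq> 0" using that by (auto simp: N_def)
    then have "0 < u2 t" "u2 t < 1" using Smd_zero[of "u2 t"] by force+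
    then show ?thesis using h(1) by (auto simp: u2_def field_simps)
  qed
  have phid: "\<phi>' t = P t - N t" for t
  proof (cases "P t = 0")
    case True
    note P0 = True
    show ?thesis
    proof (cases "N t = 0")
      case True
      then show ?thesis using P0 h(1) by (simp add: \<phi>'_def P_def N_def u1_def u2_def)
    next
      case False
      then have "x < t" using Nnz by auto
      then have "u1 t \<ge> 1" using h(1) xy by (simp add: u1_def field_simps)
      then have "Sm (u1 t) = 1" by (simp add: Sm_one)
      then show ?thesis using P0 h(1) by (simp add: \<phi>'_def P_def N_def u1_def u2_def)
    qed
  next
    case False
    then have "t < y" using Pnz by auto
    then have "u2 t \<ge> 1" using h(1) xy by (simp add: u2_def field_simps)
    then have "Sm (u2 t) = 1" "Smd (u2 t) = 0" by (simp_all add: Sm_one Smd_zero)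
    then show ?thesis by (simp add: \<phi>'_def P_def N_def u1_def u2_def)
  qed
  have Pcont: "continuous_on {0..1} P" unfolding P_def u1_def
    by (intro continuous_intros) (use h in auto)
  have Ncont: "continuous_on {0..1} N" unfolding N_def u2_def
    by (intro continuous_intros) (use h in auto)
  have Pnn: "P t \<ge> 0" for t using h(1) by (simp add: P_def Smd_nonneg)
  have Nnn: "N t \<ge> 0" for t using h(1) by (simp add: N_def Smd_nonneg)
  have iP: "set_integrable lborel {0<..<1} P" by (rule cont_int01[OF Pcont])
  have iN: "set_integrable lborel {0<..<1} N" by (rule cont_int01[OF Ncont])
  have iaP: "set_integrable lborel {0<..<1} (\<lambda>t. a t * P t)"
    by (rule cont_int01) (intro continuous_intros cont Pcont)
  have iaN: "set_integrable lborel {0<..<1} (\<lambda>t. a t * N t)"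
    by (rule cont_int01) (intro continuous_intros cont Ncont)
  have IP: "(LINT t:{0<..<1}|lborel. P t) = 1"
  proof -
    have "(LINT t:{0<..<1}|lborel. P t) = Sm (u1 1) - Sm (u1 0)"
    proof (rule ftc_ab(2))
      fix t :: real
      have d1: "((\<lambda>t. (t - y + h)/h) has_real_derivative 1/h) (at t)"
        using h(1) by (auto intro!: derivative_eq_intros)
      show "((\<lambda>t. Sm (u1 t)) has_real_derivative P t) (at t)"
        using Sm_chain[OF d1] unfolding u1_def P_def by simp
    qed (use Pcont in auto)
    moreover have "u1 1 \<ge> 1" "u1 0 \<le> 0" using h xy by (simp_all add: u1_def field_simps)
    ultimately show ?thesis by (simp add: Sm_one Sm_zero)
  qed
  have IN: "(LINT t:{0<..<1}|lborel. N t) = 1"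
  proof -
    have "(LINT t:{0<..<1}|lborel. N t) = (- Sm (u2 1)) - (- Sm (u2 0))"
    proof (rule ftc_ab(2))
      fix t :: real
      have d2: "((\<lambda>t. (x + h - t)/h) has_real_derivative -1/h) (at t)"
        using h(1) by (auto intro!: derivative_eq_intros)
      show "((\<lambda>t. - Sm (u2 t)) has_real_derivative N t) (at t)"
        using DERIV_minus[OF Sm_chain[OF d2]] unfolding u2_def N_def by simp
    qed (use Ncont in auto)
    moreover have "u2 1 \<le> 0" "u2 0 \<ge> 1" using h xy by (simp_all add: u2_def field_simps)
    ultimately show ?thesis by (simp add: Sm_one Sm_zero)
  qed
  have E1: "\<bar>(LINT t:{0<..<1}|lborel. a t * P t) - a y\<bar> \<le> e"
  proof -
    have "(LINT t:{0<..<1}|lborel. a t * P t) - a y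
        = (LINT t:{0<..<1}|lborel. a t * P t) - (LINT t:{0<..<1}|lborel. a y * P t)"
      using IP by simp
    also have "\<dots> = (LINT t:{0<..<1}|lborel. a t * P t - a y * P t)"
      by (rule set_integral_diff(2)[symmetric]) (use iaP iP in auto)
    finally have eq: "(LINT t:{0<..<1}|lborel. a t * P t) - a y
        = (LINT t:{0<..<1}|lborel. a t * P t - a y * P t)" .
    have "\<bar>LINT t:{0<..<1}|lborel. a t * P t - a y * P t\<bar> \<le> (LINT t:{0<..<1}|lborel. e * P t)"
    proof (rule abs_set_integral_le_AE)
      show "set_integrable lborel {0<..<1} (\<lambda>t. a t * P t - a y * P t)"
        by (rule set_integral_diff(1)) (use iaP iP in auto)
      show "set_integrable lborel {0<..<1} (\<lambda>t. e * P t)" using iP by auto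
      show "AE t in lborel. t \<in> {0<..<1} \<longrightarrow> \<bar>a t * P t - a y * P t\<bar> \<le> e * P t"
      proof (intro AE_I2 impI)
        fix t :: real assume t: "t \<in> {0<..<1}"
        show "\<bar>a t * P t - a y * P t\<bar> \<le> e * P t"
        proof (cases "P t = 0")
          case False
          then have "y - h < t" "t < y" using Pnz by auto
          then have "dist (a t) (a y) < e" using d1(2)[of t] t h by (auto simp: dist_real_def)
          then have "\<bar>a t - a y\<bar> \<le> e" by (simp add: dist_real_def)
          then have "\<bar>a t - a y\<bar> * P t \<le> e * P t" using Pnn by (rule mult_right_mono)
          then show ?thesis using Pnn[of t] by (simp add: left_diff_distrib[symmetric] abs_mult)
        qed simp
      qed
    qed
    then show ?thesis using eq IP by simp
  qed
  have E2: "\<bar>(LINT t:{0<..<1}|lborel. a t * N t) - a x\<bar> \<le> e"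
  proof -
    have "(LINT t:{0<..<1}|lborel. a t * N t) - a x
        = (LINT t:{0<..<1}|lborel. a t * N t) - (LINT t:{0<..<1}|lborel. a x * N t)"
      using IN by simp
    also have "\<dots> = (LINT t:{0<..<1}|lborel. a t * N t - a x * N t)"
      by (rule set_integral_diff(2)[symmetric]) (use iaN iN in auto)
    finally have eq: "(LINT t:{0<..<1}|lborel. a t * N t) - a x
        = (LINT t:{0<..<1}|lborel. a t * N t - a x * N t)" .
    have "\<bar>LINT t:{0<..<1}|lborel. a t * N t - a x * N t\<bar> \<le> (LINT t:{0<..<1}|lborel. e * N t)"
    proof (rule abs_set_integral_le_AE)
      show "set_integrable lborel {0<..<1} (\<lambda>t. a t * N t - a x * N t)"
        by (rule set_integral_diff(1)) (use iaN iN in auto)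
      show "set_integrable lborel {0<..<1} (\<lambda>t. e * N t)" using iN by auto
      show "AE t in lborel. t \<in> {0<..<1} \<longrightarrow> \<bar>a t * N t - a x * N t\<bar> \<le> e * N t"
      proof (intro AE_I2 impI)
        fix t :: real assume t: "t \<in> {0<..<1}"
        show "\<bar>a t * N t - a x * N t\<bar> \<le> e * N t"
        proof (cases "N t = 0")
          case False
          then have "x < t" "t < x + h" using Nnz by auto
          then have "dist (a t) (a x) < e" using d2(2)[of t] t h by (auto simp: dist_real_def)
          then have "\<bar>a t - a x\<bar> \<le> e" by (simp add: dist_real_def)
          then have "\<bar>a t - a x\<bar> * N t \<le> e * N t" using Nnn by (rule mult_right_mono)
          then show ?thesis using Nnn[of t] by (simp add: left_diff_distrib[symmetric] abs_mult)
        qed simp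
      qed
    qed
    then show ?thesis using eq IN by simp
  qed
  have split: "(LINT t:{0<..<1}|lborel. a t * \<phi>' t)
      = (LINT t:{0<..<1}|lborel. a t * P t) - (LINT t:{0<..<1}|lborel. a t * N t)"
  proof -
    have "(LINT t:{0<..<1}|lborel. a t * \<phi>' t) = (LINT t:{0<..<1}|lborel. a t * P t - a t * N t)"
      by (simp add: phid right_diff_distrib)
    also have "\<dots> = (LINT t:{0<..<1}|lborel. a t * P t) - (LINT t:{0<..<1}|lborel. a t * N t)"
      by (rule set_integral_diff(2)) (use iaP iaN in auto)
    finally show ?thesis .
  qed
  have phib: "0 \<le> \<phi> t" "\<phi> t \<le> 1" for t
    unfolding \<phi>_def using Sm_range by (auto intro: mult_le_one)
  have phi0: "\<phi> t = 0" if "t \<notin> {y - h..x + h}" for t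
  proof -
    have "t < y - h \<or> t > x + h" using that by auto
    then show ?thesis
    proof
      assume "t < y - h"
      then have "(t - y + h)/h \<le> 0" using h(1) by (simp add: divide_nonpos_pos)
      then show ?thesis by (simp add: \<phi>_def Sm_zero)
    next
      assume "t > x + h"
      then have "(x + h - t)/h \<le> 0" using h(1) by (simp add: divide_nonpos_pos)
      then show ?thesis by (simp add: \<phi>_def Sm_zero)
    qed
  qed
  have phicont: "continuous_on UNIV \<phi>" unfolding \<phi>_def
    by (intro continuous_intros) (use h(1) in auto)
  have phim: "\<phi> \<in> borel_measurable lborel"
    using borel_measurable_continuous_onI[OF phicont] by simp
  have gm': "(\<lambda>t. indicator {0<..<1} t *\<^sub>R g t) \<in> borel_measurable lborel"
    using gm unfolding set_borel_measurable_def .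
  have i1: "integrable lborel (\<lambda>t::real. indicator {0<..<1} t *\<^sub>R C)"
    using cont_int01[OF continuous_on_const[of "{0..1}" C]] unfolding set_integrable_def .
  have "(\<lambda>t. indicator {0<..<1} t *\<^sub>R (g t * \<phi> t)) = (\<lambda>t. (indicator {0<..<1} t *\<^sub>R g t) * \<phi> t)"
    by (simp add: fun_eq_iff)
  then have m1: "(\<lambda>t. indicator {0<..<1} t *\<^sub>R (g t * \<phi> t)) \<in> borel_measurable lborel"
    using borel_measurable_times[OF gm' phim] by simp
  have ae1: "AE t::real in lborel. norm (indicator {0<..<1} t *\<^sub>R (g t * \<phi> t)) \<le> norm (indicator {0<..<1} t *\<^sub>R C)"
    using gb
  proof eventually_elim
    case (elim t)
    show ?case
    proof (cases "t \<in> {0<..<1}")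
      case True
      then have "\<bar>g t\<bar> \<le> C" using elim by simp
      moreover have "\<bar>\<phi> t\<bar> \<le> 1" using phib[of t] by simp
      ultimately have "\<bar>g t\<bar> * \<bar>\<phi> t\<bar> \<le> C * 1" by (intro mult_mono) (use C in auto)
      then show ?thesis using True C by (simp add: abs_mult)
    qed simp
  qed
  have igphi: "set_integrable lborel {0<..<1} (\<lambda>t. g t * \<phi> t)"
    unfolding set_integrable_def using Bochner_Integration.integrable_bound[OF i1 m1 ae1] .
  have Ieq: "(\<lambda>t. indicator {0<..<1} t *\<^sub>R (C * indicator {y - h..x + h} t)) = (\<lambda>t. C * indicator {y - h..x + h} t)"
    using h by (auto simp: fun_eq_iff indicator_def)
  have ik: "set_integrable lborel {0<..<1} (\<lambda>t. C * indicator {y - h..x + h} t :: real)"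
    unfolding set_integrable_def Ieq using h xy
    by (intro integrable_mult_right integrable_real_indicator) (auto simp: emeasure_lborel_Icc_eq)
  have Ik: "(LINT t:{0<..<1}|lborel. C * indicator {y - h..x + h} t) = C * (x - y + 2*h)"
  proof -
    have "(LINT t:{0<..<1}|lborel. C * indicator {y - h..x + h} t) = (LINT t|lborel. C * indicator {y - h..x + h} t)"
      unfolding set_lebesgue_integral_def Ieq ..
    also have "\<dots> = C * measure lborel {y - h..x + h}" by simp
    also have "\<dots> = C * (x - y + 2*h)" using h xy by simp
    finally show ?thesis .
  qed
  have G: "\<bar>LINT t:{0<..<1}|lborel. g t * \<phi> t\<bar> \<le> C * (x - y + 2*h)"
  proof -
    have "\<bar>LINT t:{0<..<1}|lborel. g t * \<phi> t\<bar> \<le> (LINT t:{0<..<1}|lborel. C * indicator {y - h..x + h} t)"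
    proof (rule abs_set_integral_le_AE[OF igphi ik])
      show "AE t in lborel. t \<in> {0<..<1} \<longrightarrow> \<bar>g t * \<phi> t\<bar> \<le> C * indicator {y - h..x + h} t"
        using gb
      proof eventually_elim
        case (elim t)
        show ?case
        proof (intro impI)
          assume t: "t \<in> {0<..<1}"
          show "\<bar>g t * \<phi> t\<bar> \<le> C * indicator {y - h..x + h} t"
          proof (cases "t \<in> {y - h..x + h}")
            case True
            have "\<bar>g t\<bar> \<le> C" using elim t by simp
            moreover have "\<bar>\<phi> t\<bar> \<le> 1" using phib[of t] by simp
            ultimately have "\<bar>g t\<bar> * \<bar>\<phi> t\<bar> \<le> C * 1" by (intro mult_mono) (use C in auto)
            then show ?thesis using True by (simp add: abs_mult)
          next
            case False
            then show ?thesis using phi0[OF False] by simp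
          qed
        qed
      qed
    qed
    then show ?thesis using Ik by (simp only:)
  qed
  have "\<bar>a x - a y\<bar> \<le> \<bar>LINT t:{0<..<1}|lborel. g t * \<phi> t\<bar> + 2 * e"
    using E1 E2 split weq by linarith
  also have "\<dots> \<le> C * (x - y) + 2 * C * h + 2 * e" using G by (simp add: algebra_simps)
  also have "\<dots> \<le> C * (x - y) + (2 + 2*C) * e"
    using h(2) C by (simp add: algebra_simps mult_left_mono)
  finally show ?thesis .
qed


lemma lip:
  fixes a g :: "real \<Rightarrow> real"
  assumes cont: "continuous_on {0..1} a" and wd: "weak_deriv a g"
    and gm: "set_borel_measurable lborel {0<..<1} g"
    and gb: "AE t in lborel. t \<in> {0<..<1} \<longrightarrow> \<bar>g t\<bar> \<le> C" and C: "C \<ge> 0"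
    and xy: "0 < y" "y < x" "x < 1"
  shows "\<bar>a x - a y\<bar> \<le> C * (x - y)"
proof (rule ccontr)
  assume "\<not> ?thesis"
  then have D: "\<bar>a x - a y\<bar> - C * (x - y) > 0" by simp
  define e where "e = (\<bar>a x - a y\<bar> - C * (x - y)) / (2 * (2 + 2*C))"
  have e: "e > 0" unfolding e_def using D C by simp
  have "\<bar>a x - a y\<bar> \<le> C * (x - y) + (2 + 2*C) * e"
    by (rule lip_eps[OF cont wd gm gb C xy e])
  also have "(2 + 2*C) * e = (\<bar>a x - a y\<bar> - C * (x - y)) / 2"
    unfolding e_def using C by (simp add: field_simps)
  finally have "\<bar>a x - a y\<bar> \<le> C * (x - y) + (\<bar>a x - a y\<bar> - C * (x - y)) / 2" .
  then show False using D by argo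
qed

lemma W1inf_lin:
  assumes "W1inf a" "a x0 = 0" "0 < x0" "x0 < 1"
  shows "\<exists>L>0. \<forall>t\<in>{x0<..<1}. a t \<le> L * (t - x0)"
proof -
  obtain g where cont: "continuous_on {0..1} a" and wd: "weak_deriv a g" and lg: "Linf g"
    using assms(1) unfolding W1inf_def by blast
  obtain C where gm: "set_borel_measurable lborel {0<..<1} g"
    and gb: "AE x in lborel. x \<in> {0<..<1} \<longrightarrow> \<bar>g x\<bar> \<le> C"
    using lg unfolding Linf_def by blast
  have gb': "AE x in lborel. x \<in> {0<..<1} \<longrightarrow> \<bar>g x\<bar> \<le> max C 0"
    using gb by eventually_elim auto
  show ?thesis
  proof (intro exI[of _ "max C 0 + 1"] conjI ballI)
    fix t assume t: "t \<in> {x0<..<1}"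
    have "\<bar>a t - a x0\<bar> \<le> max C 0 * (t - x0)"
      by (rule lip[OF cont wd gm gb']) (use t assms in auto)
    also have "\<dots> \<le> (max C 0 + 1) * (t - x0)" using t by (intro mult_right_mono) auto
    finally show "a t \<le> (max C 0 + 1) * (t - x0)" using assms(2) by simp
  qed simp
qed

lemma noint:
  fixes f :: "real \<Rightarrow> real"
  assumes d: "0 < \<delta>" and c: "c > 0" and bd: "\<And>t. t \<in> {x0<..<x0+\<delta>} \<Longrightarrow> f t \<ge> c / (t - x0)"
  shows "\<not> set_integrable lborel {x0<..<x0+\<delta>} f"
proof
  assume fi: "set_integrable lborel {x0<..<x0+\<delta>} f"
  define I where "I = (LINT t:{x0<..<x0+\<delta>}|lborel. f t)"
  have key: "c * (ln \<delta> - ln s) \<le> I" if s: "0 < s" "s < \<delta>" for s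
  proof -
    have ftc: "(LINT t:{x0+s<..<x0+\<delta>}|lborel. c / (t - x0)) = c * ln (x0 + \<delta> - x0) - c * ln (x0 + s - x0)"
      and int1: "set_integrable lborel {x0+s<..<x0+\<delta>} (\<lambda>t. c / (t - x0))"
    proof -
      have cont: "continuous_on {x0+s..x0+\<delta>} (\<lambda>t. c / (t - x0))"
        using s by (intro continuous_intros) auto
      have der: "((\<lambda>t. c * ln (t - x0)) has_real_derivative c / (t - x0)) (at t)"
        if "x0 + s \<le> t" "t \<le> x0 + \<delta>" for t
        using that s by (auto intro!: derivative_eq_intros simp: field_simps)
      show "(LINT t:{x0+s<..<x0+\<delta>}|lborel. c / (t - x0)) = c * ln (x0 + \<delta> - x0) - c * ln (x0 + s - x0)"
        by (rule ftc_ab(2)[OF _ der cont]) (use s in auto)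
      show "set_integrable lborel {x0+s<..<x0+\<delta>} (\<lambda>t. c / (t - x0))"
        by (rule ftc_ab(1)[OF _ der cont]) (use s in auto)
    qed
    have fi2: "set_integrable lborel {x0+s<..<x0+\<delta>} f"
      by (rule set_integrable_subset[OF fi]) (use s in auto)
    have "(LINT t:{x0+s<..<x0+\<delta>}|lborel. c / (t - x0)) \<le> (LINT t:{x0+s<..<x0+\<delta>}|lborel. f t)"
      by (rule set_integral_mono[OF int1 fi2]) (use s in \<open>auto intro!: bd\<close>)
    also have "\<dots> \<le> I"
      unfolding I_def set_lebesgue_integral_def
    proof (rule integral_mono)
      show "integrable lborel (\<lambda>t. indicator {x0+s<..<x0+\<delta>} t *\<^sub>R f t)"
        using fi2 unfolding set_integrable_def .
      show "integrable lborel (\<lambda>t. indicator {x0<..<x0+\<delta>} t *\<^sub>R f t)"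
        using fi unfolding set_integrable_def .
      fix t :: real
      show "indicator {x0+s<..<x0+\<delta>} t *\<^sub>R f t \<le> indicator {x0<..<x0+\<delta>} t *\<^sub>R f t"
      proof (cases "t \<in> {x0<..<x0+\<delta>}")
        case True
        then have "c / (t - x0) > 0" using c by simp
        then have "f t \<ge> 0" using bd[OF True] by linarith
        then show ?thesis using True by (auto simp: indicator_def)
      next
        case False
        then show ?thesis using s by (auto simp: indicator_def)
      qed
    qed
    finally show ?thesis using ftc by (simp add: right_diff_distrib)
  qed
  define s where "s = \<delta> * exp (- (\<bar>I\<bar> / c + 1))"
  have s0: "0 < s" unfolding s_def using d by simp
  have "\<bar>I\<bar> / c \<ge> 0" using c by simp
  then have "exp (- (\<bar>I\<bar> / c + 1)) < 1" by simp
  then have s1: "s < \<delta>" unfolding s_def using d by simp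
  have "ln s = ln \<delta> - (\<bar>I\<bar> / c + 1)" unfolding s_def using d by (simp add: ln_mult)
  then have "c * (ln \<delta> - ln s) = \<bar>I\<bar> + c" using c by (simp add: field_simps)
  then show False using key[OF s0 s1] c by linarith
qed

lemma recip_bound:
  fixes p q c :: real
  assumes "0 < p" "p \<le> q / c" "c > 0" "q > 0"
  shows "c / q \<le> 1 / p"
proof -
  have "c * p \<le> q" using assms by (simp add: field_simps)
  then show ?thesis using assms by (simp add: field_simps)
qed


lemma main_from_bound:
  fixes a b :: "real \<Rightarrow> real"
  assumes x0: "x\<^sub>0 \<in> {0<..<1}" and d: "0 < \<delta>" "x\<^sub>0 + \<delta> \<le> 1" and c: "c > 0"
    and pos: "\<forall>x\<in>{0..1} - {x\<^sub>0}. a x > 0 \<and> b x > 0"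
    and bd: "\<And>t. t \<in> {x\<^sub>0<..<x\<^sub>0+\<delta>} \<Longrightarrow> c / (t - x\<^sub>0) \<le> 1 / (a t * b t)"
  shows "\<not> L1 (\<lambda>x. 1 / (a x * b x)) \<and> (\<forall>dir u. K_ab dir a b u \<longrightarrow> u x\<^sub>0 = 0)"
proof (intro conjI allI impI)
  show "\<not> L1 (\<lambda>x. 1 / (a x * b x))"
  proof
    assume "L1 (\<lambda>x. 1 / (a x * b x))"
    then have "set_integrable lborel {0<..<1} (\<lambda>x. 1 / (a x * b x))" unfolding L1_def .
    then have "set_integrable lborel {x\<^sub>0<..<x\<^sub>0+\<delta>} (\<lambda>x. 1 / (a x * b x))"
      by (rule set_integrable_subset) (use x0 d in auto)
    moreover have "\<not> set_integrable lborel {x\<^sub>0<..<x\<^sub>0+\<delta>} (\<lambda>x. 1 / (a x * b x))"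
      by (rule noint[OF d(1) c]) (rule bd)
    ultimately show False by blast
  qed
next
  fix dir u assume K: "K_ab dir a b u"
  have H1: "H1 u" using K unfolding K_ab_def K_a_def H10_def by (auto split: if_splits)
  then have cu: "continuous_on {0..1} u" unfolding H1_def by blast
  have iu: "set_integrable lborel {0<..<1} (\<lambda>x. (u x / sqrt (a x * b x))\<^sup>2)"
    using K unfolding K_ab_def L2_def by blast
  show "u x\<^sub>0 = 0"
  proof (rule ccontr)
    assume nz: "u x\<^sub>0 \<noteq> 0"
    define m where "m = \<bar>u x\<^sub>0\<bar> / 2"
    have m: "m > 0" unfolding m_def using nz by simp
    obtain d1 where d1: "d1 > 0" "\<And>t. t \<in> {0..1} \<Longrightarrow> dist t x\<^sub>0 < d1 \<Longrightarrow> dist (u t) (u x\<^sub>0) < m"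
      using cu x0 m unfolding continuous_on_iff by (metis greaterThanLessThan_iff atLeastAtMost_iff less_le)
    define \<delta>' where "\<delta>' = min \<delta> d1"
    have d': "0 < \<delta>'" "\<delta>' \<le> \<delta>" "\<delta>' \<le> d1" unfolding \<delta>'_def using d d1 by auto
    have sub: "set_integrable lborel {x\<^sub>0<..<x\<^sub>0+\<delta>'} (\<lambda>x. (u x / sqrt (a x * b x))\<^sup>2)"
      by (rule set_integrable_subset[OF iu]) (use x0 d d' in auto)
    have "\<not> set_integrable lborel {x\<^sub>0<..<x\<^sub>0+\<delta>'} (\<lambda>x. (u x / sqrt (a x * b x))\<^sup>2)"
    proof (rule noint[OF d'(1), where c="m^2 * c"])
      show "m^2 * c > 0" using m c by simp
      fix t assume t: "t \<in> {x\<^sub>0<..<x\<^sub>0+\<delta>'}"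
      then have t1: "t \<in> {0..1}" "t \<noteq> x\<^sub>0" using x0 d d' by auto
      have ab: "a t * b t > 0" using pos t1 by auto
      have "dist (u t) (u x\<^sub>0) < m" using d1(2)[OF t1(1)] t d' by (auto simp: dist_real_def)
      then have um: "\<bar>u t\<bar> \<ge> m" unfolding m_def dist_real_def by linarith
      then have um2: "(u t)^2 \<ge> m^2" using m by (metis abs_ge_zero order_trans less_imp_le power2_abs power_mono)
      have eq: "(u t / sqrt (a t * b t))\<^sup>2 = (u t)^2 * (1 / (a t * b t))"
        using ab by (simp add: power_divide)
      have "m^2 * c / (t - x\<^sub>0) = m^2 * (c / (t - x\<^sub>0))" by simp
      also have "\<dots> \<le> (u t)^2 * (1 / (a t * b t))"
      proof (rule mult_mono[OF um2])
        show "c / (t - x\<^sub>0) \<le> 1 / (a t * b t)" using t d' by (intro bd) auto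
        show "0 \<le> (u t)^2" by simp
        show "0 \<le> c / (t - x\<^sub>0)" using c t by simp
      qed
      finally show "m^2 * c / (t - x\<^sub>0) \<le> (u t / sqrt (a t * b t))\<^sup>2" using eq by simp
    qed
    then show False using sub by blast
  qed
qed

theorem lemma2p3:
  fixes a b :: "real \<Rightarrow> real" and x\<^sub>0 :: real
  assumes "x\<^sub>0 \<in> {0<..<1}"
    and "a x\<^sub>0 = 0" and "b x\<^sub>0 = 0"
    and "\<forall>x\<in>{0..1} - {x\<^sub>0}. a x > 0 \<and> b x > 0"
    and "(W1inf a \<and> W1inf b) \<or>
         (W11 a \<and> W11 b \<and>
          (\<exists>K1 K2 c1 c2 :: real. K1 > 0 \<and> K2 > 0 \<and> c1 > 0 \<and> c2 > 0 \<and> K1 + K2 \<ge> 1 \<and>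
             (\<forall>x\<in>{0..1}. \<bar>x - x\<^sub>0\<bar> powr K1 \<ge> c1 * a x \<and> \<bar>x - x\<^sub>0\<bar> powr K2 \<ge> c2 * b x)))"
  shows "\<not> L1 (\<lambda>x. 1 / (a x * b x)) \<and> (\<forall>dir u. K_ab dir a b u \<longrightarrow> u x\<^sub>0 = 0)"
proof -
  have x0: "0 < x\<^sub>0" "x\<^sub>0 < 1" using assms(1) by auto
  have pos: "a t > 0" "b t > 0" if "t \<in> {x\<^sub>0<..<1}" for t
    using assms(4) that x0 by auto
  obtain c where c: "c > 0" and bd: "\<And>t. t \<in> {x\<^sub>0<..<x\<^sub>0+(1-x\<^sub>0)} \<Longrightarrow> c / (t - x\<^sub>0) \<le> 1 / (a t * b t)"
  proof -
    from assms(5) show ?thesis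
    proof
      assume W: "W1inf a \<and> W1inf b"
      obtain La where La: "La > 0" "\<And>t. t \<in> {x\<^sub>0<..<1} \<Longrightarrow> a t \<le> La * (t - x\<^sub>0)"
        using W1inf_lin[of a x\<^sub>0] W assms(2) x0 by blast
      obtain Lb where Lb: "Lb > 0" "\<And>t. t \<in> {x\<^sub>0<..<1} \<Longrightarrow> b t \<le> Lb * (t - x\<^sub>0)"
        using W1inf_lin[of b x\<^sub>0] W assms(3) x0 by blast
      show ?thesis
      proof (rule that[of "1 / (La * Lb)"])
        show "1 / (La * Lb) > 0" using La Lb by simp
        fix t assume "t \<in> {x\<^sub>0<..<x\<^sub>0+(1-x\<^sub>0)}"
        then have t: "t \<in> {x\<^sub>0<..<1}" by simp
        have "a t * b t \<le> (La * (t - x\<^sub>0)) * (Lb * (t - x\<^sub>0))"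
          using La(2)[OF t] Lb(2)[OF t] pos[OF t] by (intro mult_mono) auto
        also have "\<dots> = (La * Lb) * ((t - x\<^sub>0) * (t - x\<^sub>0))" by (simp add: algebra_simps)
        also have "\<dots> \<le> (La * Lb) * (t - x\<^sub>0)"
          using t La Lb x0 by (intro mult_left_mono) (auto intro: mult_left_le_one_le)
        finally have "a t * b t \<le> (t - x\<^sub>0) / (1 / (La * Lb))" by (simp add: mult.commute)
        then show "1 / (La * Lb) / (t - x\<^sub>0) \<le> 1 / (a t * b t)"
          using pos[OF t] t La Lb by (intro recip_bound) auto
      qed
    next
      assume "W11 a \<and> W11 b \<and>
          (\<exists>K1 K2 c1 c2 :: real. K1 > 0 \<and> K2 > 0 \<and> c1 > 0 \<and> c2 > 0 \<and> K1 + K2 \<ge> 1 \<and>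
             (\<forall>x\<in>{0..1}. \<bar>x - x\<^sub>0\<bar> powr K1 \<ge> c1 * a x \<and> \<bar>x - x\<^sub>0\<bar> powr K2 \<ge> c2 * b x))"
      then obtain K1 K2 c1 c2 :: real where K: "K1 > 0" "K2 > 0" "c1 > 0" "c2 > 0" "K1 + K2 \<ge> 1"
        and Kb: "\<And>x. x \<in> {0..1} \<Longrightarrow> \<bar>x - x\<^sub>0\<bar> powr K1 \<ge> c1 * a x \<and> \<bar>x - x\<^sub>0\<bar> powr K2 \<ge> c2 * b x"
        by blast
      show ?thesis
      proof (rule that[of "c1 * c2"])
        show "c1 * c2 > 0" using K by simp
        fix t assume "t \<in> {x\<^sub>0<..<x\<^sub>0+(1-x\<^sub>0)}"
        then have t: "t \<in> {x\<^sub>0<..<1}" by simp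
        have t01: "t \<in> {0..1}" using t x0 by auto
        have tp: "t - x\<^sub>0 > 0" "t - x\<^sub>0 \<le> 1" using t x0 by auto
        have absx: "\<bar>t - x\<^sub>0\<bar> = t - x\<^sub>0" using tp by simp
        have "(c1 * a t) * (c2 * b t) \<le> (t - x\<^sub>0) powr K1 * (t - x\<^sub>0) powr K2"
          using Kb[OF t01] pos[OF t] K absx by (intro mult_mono) auto
        also have "\<dots> = (t - x\<^sub>0) powr (K1 + K2)" by (simp add: powr_add)
        also have "\<dots> \<le> (t - x\<^sub>0) powr 1"
          using tp K by (intro powr_mono') auto
        also have "\<dots> = t - x\<^sub>0" using tp by simp
        finally have "(c1 * c2) * (a t * b t) \<le> t - x\<^sub>0" by (simp add: algebra_simps)
        then have "a t * b t \<le> (t - x\<^sub>0) / (c1 * c2)" using K by (simp add: field_simps)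
        then show "c1 * c2 / (t - x\<^sub>0) \<le> 1 / (a t * b t)"
          using pos[OF t] tp K by (intro recip_bound) auto
      qed
    qed
  qed
  show ?thesis
    by (rule main_from_bound[where \<delta>="1 - x\<^sub>0", OF assms(1) _ _ c assms(4) bd]) (use x0 in auto)
qed

end
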